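(* Let $\mathcal A_+,\mathcal A_-\subseteq\mathbb Z^n$ be disjoint nonempty finite sets, $\mathcal A=\mathcal A_+\cup\mathcal A_-$, such that $\mathcal A_-\subseteq\operatorname{relint}(\Gamma)$ for a face $\Gamma$ of $\operatorname{conv}(\mathcal A_+)$ and $(\mathcal A_+\cap\Gamma,\mathcal A_-\cap\Gamma)$ is nonseparable. Let $f\in\mathcal S(\mathcal A_+,\mathcal A_-)$ have nonsigned coefficients $c\in\mathbb R^{\mathcal A}_{>0}$ and let $h:\mathcal A\to\mathbb Z$ be a height function lifting $\mathcal A_-$. Then the set $S:=\{t\in\mathbb R_{>0}:F^\Gamma(\pi_\Gamma(c\star t^h),x)=0\text{ for some }x\in\mathbb R^n_{>0}\}$ has exactly one element.
   Context: A signomial with signed support $(\mathcal A_+,\mathcal A_-)$ is $f_c(x)=\sum_{a\in\mathcal A_+}c_ax^a-\sum_{b\in\mathcal A_-}c_bx^b$ on $\mathbb R^n_{>0}$, $c\in\mathbb R^{\mathcal A}_{>0}$ (nonsigned coefficients); $\mathcal S(\mathcal A_+,\mathcal A_-)$ is the set of these. For a signed support $(\mathcal B_+,\mathcal B_-)$ the critical system is $F(c,x)=(f_c(x),x_1\partial_{x_1}f_c(x),\dots,x_n\partial_{x_n}f_c(x))$. $\pi_\Gamma:\mathbb R^{\mathcal A}\to\mathbb R^{\mathcal A\cap\Gamma}$ is the coordinate projection and $F^\Gamma$ the critical system of $(\mathcal A_+\cap\Gamma,\mathcal A_-\cap\Gamma)$. A height function $h$ lifts $\mathcal A_-$ if $h(a)>0$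 for $a\in\mathcal A_-$, $h(a)=0$ for $a\in\mathcal A_+$; $c\star t^h=(c_at^{h(a)})_a$. For $(\mathcal B_+,\mathcal B_-)$ of dimension $d=\dim\operatorname{conv}(\mathcal B_+\cup\mathcal B_-)$: $\mathcal F(\mathcal B_+)$ is the common refinement of all regular polyhedral subdivisions of $\mathcal B_+$, $\mathcal F_d(\mathcal B_+)$ its $d$-cells, and $(\mathcal B_+,\mathcal B_-)$ is nonseparable if $\mathcal B_-\subseteq\operatorname{relint}\operatorname{conv}(\mathcal B_+)$ and some $D\in\mathcal F_d(\mathcal B_+)$ contains $\mathcal B_-$. *)

theory Defs
  imports "HOL-Analysis.Analysis"
begin

definition rv :: "int ^ 'n \<Rightarrow> real ^ 'n" where
  "rv a = (\<chi> i. real_of_int (a $ i))"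

definition monom :: "int ^ 'n \<Rightarrow> real ^ 'n \<Rightarrow> real" where
  "monom a x = (\<Prod>i\<in>UNIV. (x $ i) powr real_of_int (a $ i))"

definition signomial :: "(int ^ 'n) set \<Rightarrow> (int ^ 'n) set \<Rightarrow> (int ^ 'n \<Rightarrow> real) \<Rightarrow> real ^ 'n \<Rightarrow> real" where
  "signomial Ap Am c x = (\<Sum>a\<in>Ap. c a * monom a x) - (\<Sum>b\<in>Am. c b * monom b x)"

definition xpartial :: "(real ^ 'n \<Rightarrow> real) \<Rightarrow> 'n \<Rightarrow> real ^ 'n \<Rightarrow> real" where
  "xpartial f i x = x $ i * deriv (\<lambda>s. f (\<chi> j. if j = i then s else x $ j)) (x $ i)"

definition crit_system_zero :: "(int ^ 'n) set \<Rightarrow> (int ^ 'n) set \<Rightarrow> (int ^ 'n \<Rightarrow> real) \<Rightarrow> real ^ 'n \<Rightarrow> bool" where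
  "crit_system_zero Bp Bm c x \<longleftrightarrow>
     signomial Bp Bm c x = 0 \<and> (\<forall>i. xpartial (signomial Bp Bm c) i x = 0)"

definition lifts :: "(int ^ 'n \<Rightarrow> int) \<Rightarrow> (int ^ 'n) set \<Rightarrow> (int ^ 'n) set \<Rightarrow> bool" where
  "lifts h Ap Am \<longleftrightarrow> (\<forall>a\<in>Am. h a > 0) \<and> (\<forall>a\<in>Ap. h a = 0)"

text \<open>Cells (all faces) of the regular subdivision of the point configuration B induced by the
  height w: projections of the lower faces of the lifted configuration.\<close>
definition reg_cells :: "(real ^ 'n) set \<Rightarrow> (real ^ 'n \<Rightarrow> real) \<Rightarrow> (real ^ 'n) set set" where
  "reg_cells B w = {convex hull {b\<in>B. \<forall>b'\<in>B. w b - v \<bullet> b \<le> w b' - v \<bullet> b'} | v. True}"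

definition refinement_cells :: "(real ^ 'n) set \<Rightarrow> (real ^ 'n) set set" where
  "refinement_cells B = {D. D \<noteq> {} \<and>
      (\<exists>C. (\<forall>w. C w \<in> reg_cells B w) \<and> D = \<Inter> (range C))}"

definition nonseparable :: "(int ^ 'n) set \<Rightarrow> (int ^ 'n) set \<Rightarrow> bool" where
  "nonseparable Bp Bm \<longleftrightarrow>
     rv ` Bm \<subseteq> rel_interior (convex hull (rv ` Bp)) \<and>
     (\<exists>D\<in>refinement_cells (rv ` Bp).
        aff_dim D = aff_dim (convex hull (rv ` (Bp \<union> Bm))) \<and> rv ` Bm \<subseteq> D)"

end

theory Submission
  imports Defs
begin

definition lnv :: "real ^ 'n \<Rightarrow> real ^ 'n" where "lnv x = (\<chi> i. ln (x $ i))"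

lemma monom_exp:
  assumes "\<forall>i. x $ i > 0"
  shows "monom a x = exp (rv a \<bullet> lnv x)"
proof -
  have "monom a x = (\<Prod>i\<in>UNIV. exp (real_of_int (a $ i) * ln (x $ i)))"
    unfolding monom_def
  proof (rule prod.cong)
    fix i show "x $ i powr real_of_int (a $ i) = exp (real_of_int (a $ i) * ln (x $ i))"
      using assms[rule_format, of i] by (simp add: powr_def)
  qed simp
  also have "\<dots> = exp (\<Sum>i\<in>UNIV. real_of_int (a $ i) * ln (x $ i))"
    by (simp add: exp_sum)
  also have "\<dots> = exp (rv a \<bullet> lnv x)"
    by (simp add: inner_vec_def rv_def lnv_def)
  finally show ?thesis .
qed

definition upd :: "real ^ 'n \<Rightarrow> 'n \<Rightarrow> real \<Rightarrow> real ^ 'n" where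
  "upd x i s = (\<chi> j. if j = i then s else x $ j)"

lemma monom_upd:
  "monom a (upd x i s) = s powr real_of_int (a $ i) * (\<Prod>j\<in>UNIV - {i}. x $ j powr real_of_int (a $ j))"
proof -
  have "monom a (upd x i s) = (\<Prod>j\<in>UNIV. (upd x i s) $ j powr real_of_int (a $ j))"
    by (simp add: monom_def)
  also have "\<dots> = (upd x i s) $ i powr real_of_int (a $ i) * (\<Prod>j\<in>UNIV - {i}. (upd x i s) $ j powr real_of_int (a $ j))"
    by (rule prod.remove) auto
  also have "\<dots> = s powr real_of_int (a $ i) * (\<Prod>j\<in>UNIV - {i}. x $ j powr real_of_int (a $ j))"
    by (auto simp: upd_def intro!: prod.cong)
  finally show ?thesis .
qed

lemma upd_same: "upd x i (x $ i) = x"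
  by (simp add: upd_def vec_eq_iff)

lemma deriv_signomial:
  assumes "\<forall>j. x $ j > 0" and "finite P" "finite M"
  shows "((\<lambda>s. signomial P M d (upd x i s)) has_real_derivative
     ((\<Sum>a\<in>P. d a * real_of_int (a $ i) * monom a x) - (\<Sum>b\<in>M. d b * real_of_int (b $ i) * monom b x)) / x $ i) (at (x $ i))"
proof -
  define K where "K a = (\<Prod>j\<in>UNIV - {i}. x $ j powr real_of_int (a $ j))" for a :: "int ^ 'a"
  have xi: "x $ i > 0" using assms by auto
  have eq: "signomial P M d (upd x i s) = (\<Sum>a\<in>P. d a * (s powr real_of_int (a $ i) * K a)) - (\<Sum>b\<in>M. d b * (s powr real_of_int (b $ i) * K b))" for s
    by (simp add: signomial_def monom_upd K_def)
  have mx: "monom a x = x $ i powr real_of_int (a $ i) * K a" for a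
    using monom_upd[of a x i "x $ i"] by (simp add: upd_same K_def)
  have dd: "d a * (real_of_int (a $ i) * x $ i powr (real_of_int (a $ i) - 1) * K a) = d a * real_of_int (a $ i) * monom a x / x $ i" for a
    using xi by (simp add: mx powr_diff field_simps)
  have "((\<lambda>s. (\<Sum>a\<in>P. d a * (s powr real_of_int (a $ i) * K a)) - (\<Sum>b\<in>M. d b * (s powr real_of_int (b $ i) * K b))) has_real_derivative
     (\<Sum>a\<in>P. d a * (real_of_int (a $ i) * x $ i powr (real_of_int (a $ i) - 1) * K a)) - (\<Sum>b\<in>M. d b * (real_of_int (b $ i) * x $ i powr (real_of_int (b $ i) - 1) * K b))) (at (x $ i))"
  proof -
    have t: "((\<lambda>z. e * (z powr r * k)) has_real_derivative e * (r * x $ i powr (r - 1) * k)) (at (x $ i))" for e r k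
      by (intro DERIV_cmult DERIV_cmult_right has_real_derivative_powr xi)
    show ?thesis by (intro DERIV_diff DERIV_sum t)
  qed
  then show ?thesis
    by (simp add: eq dd sum_divide_distrib[symmetric] diff_divide_distrib)
qed

lemma xpartial_formula:
  assumes "\<forall>j. x $ j > 0" and "finite P" "finite M"
  shows "xpartial (signomial P M d) i x =
    (\<Sum>a\<in>P. d a * real_of_int (a $ i) * monom a x) - (\<Sum>b\<in>M. d b * real_of_int (b $ i) * monom b x)"
proof -
  have xi: "x $ i > 0" using assms by auto
  have "deriv (\<lambda>s. signomial P M d (upd x i s)) (x $ i) = ((\<Sum>a\<in>P. d a * real_of_int (a $ i) * monom a x) - (\<Sum>b\<in>M. d b * real_of_int (b $ i) * monom b x)) / x $ i"
    by (rule DERIV_imp_deriv[OF deriv_signomial[OF assms]])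
  then show ?thesis using xi unfolding xpartial_def upd_def[abs_def] by simp
qed

lemma crit_from_min:
  assumes "\<forall>j. x $ j > 0" and "finite P" "finite M"
    and "signomial P M d x = 0" and "\<And>z. \<forall>j. z $ j > 0 \<Longrightarrow> signomial P M d z \<ge> 0"
  shows "crit_system_zero P M d x"
  unfolding crit_system_zero_def
proof (intro conjI allI)
  show "signomial P M d x = 0" by fact
  fix i
  have xi: "x $ i > 0" using assms by auto
  define D where "D = ((\<Sum>a\<in>P. d a * real_of_int (a $ i) * monom a x) - (\<Sum>b\<in>M. d b * real_of_int (b $ i) * monom b x)) / x $ i"
  have der: "((\<lambda>s. signomial P M d (upd x i s)) has_real_derivative D) (at (x $ i))"
    unfolding D_def by (rule deriv_signomial[OF assms(1-3)])
  have "D = 0"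
  proof (rule DERIV_local_min[OF der xi], intro allI impI)
    fix y assume "\<bar>x $ i - y\<bar> < x $ i"
    then have "y > 0" by auto
    then have "\<forall>j. upd x i y $ j > 0" using assms(1) by (simp add: upd_def)
    then show "signomial P M d (upd x i (x $ i)) \<le> signomial P M d (upd x i y)"
      using assms(4,5) by (simp add: upd_same)
  qed
  then show "xpartial (signomial P M d) i x = 0"
    using xpartial_formula[OF assms(1-3)] xi by (simp add: D_def)
qed


lemma sum_inner_rv:
  "(\<Sum>a\<in>A. l a * (v \<bullet> rv a)) = (\<Sum>i\<in>UNIV. v $ i * (\<Sum>a\<in>A. l a * real_of_int (a $ i)))"
  by (simp add: inner_vec_def rv_def sum_distrib_left sum_distrib_right mult_ac sum.swap[of _ A])

lemma exp_sublevel_convex: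
  "convex {p::real^'n. exp (p \<bullet> y) - v \<bullet> p \<le> m0}"
  unfolding convex_def
proof (intro ballI allI impI)
  fix p q :: "real^'n" and u w :: real
  assume p: "p \<in> {p. exp (p \<bullet> y) - v \<bullet> p \<le> m0}" and q: "q \<in> {p. exp (p \<bullet> y) - v \<bullet> p \<le> m0}"
    and u: "0 \<le> u" and w: "0 \<le> w" and uw: "u + w = 1"
  have "exp ((u *\<^sub>R p + w *\<^sub>R q) \<bullet> y) = exp ((1 - w) *\<^sub>R (p \<bullet> y) + w *\<^sub>R (q \<bullet> y))"
    using uw by (simp add: inner_add_left)
  also have "\<dots> \<le> (1 - w) * exp (p \<bullet> y) + w * exp (q \<bullet> y)"
    using uw u w by (intro convex_onD[OF exp_convex]) auto
  finally have "exp ((u *\<^sub>R p + w *\<^sub>R q) \<bullet> y) \<le> u * exp (p \<bullet> y) + w * exp (q \<bullet> y)"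
    using uw by (metis add_diff_cancel_right')
  moreover have "v \<bullet> (u *\<^sub>R p + w *\<^sub>R q) = u * (v \<bullet> p) + w * (v \<bullet> q)"
    by (simp add: inner_add_right)
  moreover have "u * (exp (p \<bullet> y) - v \<bullet> p) \<le> u * m0"
    using p u by (intro mult_left_mono) auto
  moreover have "w * (exp (q \<bullet> y) - v \<bullet> q) \<le> w * m0"
    using q w by (intro mult_left_mono) auto
  moreover have "u * m0 + w * m0 = m0" using uw by (metis distrib_right mult_1)
  ultimately have "exp ((u *\<^sub>R p + w *\<^sub>R q) \<bullet> y) - v \<bullet> (u *\<^sub>R p + w *\<^sub>R q) \<le> m0"
    by (simp only: right_diff_distrib)
  then show "u *\<^sub>R p + w *\<^sub>R q \<in> {p. exp (p \<bullet> y) - v \<bullet> p \<le> m0}"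
    by simp
qed

lemma NN:
  assumes fin: "finite P" "finite M" and dpos: "\<forall>a\<in>P \<union> M. d a \<ge> 0"
    and ns: "nonseparable P M" and x0: "\<forall>j. x0 $ j > 0" and cz: "crit_system_zero P M d x0"
    and x: "\<forall>j. x $ j > 0"
  shows "signomial P M d x \<ge> 0"
proof -
  define l where "l a = d a * monom a x0" for a
  define y where "y = lnv x - lnv x0"
  define \<phi> where "\<phi> p = exp (p \<bullet> y)" for p :: "real^'a"
  have mx: "monom a x = monom a x0 * \<phi> (rv a)" for a
    using monom_exp[OF x] monom_exp[OF x0] by (simp add: \<phi>_def y_def inner_diff_right exp_diff)
  have sig: "signomial P M d x = (\<Sum>a\<in>P. l a * \<phi> (rv a)) - (\<Sum>b\<in>M. l b * \<phi> (rv b))"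
    by (simp add: signomial_def mx l_def mult_ac)
  have lnn: "l a \<ge> 0" if "a \<in> P \<union> M" for a
    using dpos that by (auto simp: l_def monom_exp[OF x0])
  have e0: "(\<Sum>a\<in>P. l a) = (\<Sum>b\<in>M. l b)"
    using cz by (simp add: crit_system_zero_def signomial_def l_def)
  have ei: "(\<Sum>a\<in>P. l a * real_of_int (a $ i)) = (\<Sum>b\<in>M. l b * real_of_int (b $ i))" for i
    using cz xpartial_formula[OF x0 fin, of d i] by (simp add: crit_system_zero_def l_def mult_ac)
  show ?thesis
  proof (cases "M = {}")
    case True
    have "0 \<le> (\<Sum>a\<in>P. l a * \<phi> (rv a))" using lnn by (intro sum_nonneg) (auto simp: \<phi>_def)
    then show ?thesis using sig True by simp
  next
    case False
    then obtain b0 where b0: "b0 \<in> M" by auto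
    from ns obtain D where D0: "D \<in> refinement_cells (rv ` P)" and MD: "rv ` M \<subseteq> D"
      unfolding nonseparable_def by auto
    from D0 obtain C where C: "\<forall>w. C w \<in> reg_cells (rv ` P) w" and D: "D = \<Inter> (range C)"
      unfolding refinement_cells_def by auto
    from C[rule_format, of \<phi>] obtain v where
      Cv: "C \<phi> = convex hull {b\<in>rv ` P. \<forall>b'\<in>rv ` P. \<phi> b - v \<bullet> b \<le> \<phi> b' - v \<bullet> b'}"
      unfolding reg_cells_def by blast
    define F where "F = {b\<in>rv ` P. \<forall>b'\<in>rv ` P. \<phi> b - v \<bullet> b \<le> \<phi> b' - v \<bullet> b'}"
    have MC: "rv b \<in> convex hull F" if "b \<in> M" for b
      using MD D Cv that unfolding F_def by auto
    then have "F \<noteq> {}" using b0 by fastforce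
    then obtain f0 where f0: "f0 \<in> F" by auto
    define m0 where "m0 = \<phi> f0 - v \<bullet> f0"
    have lowP: "\<phi> (rv a) \<ge> m0 + v \<bullet> rv a" if "a \<in> P" for a
      using f0 that unfolding F_def m0_def by auto
    have FS: "F \<subseteq> {p. exp (p \<bullet> y) - v \<bullet> p \<le> m0}"
      using f0 unfolding F_def m0_def \<phi>_def by auto
    have upM: "\<phi> (rv b) \<le> m0 + v \<bullet> rv b" if "b \<in> M" for b
    proof -
      have "convex hull F \<subseteq> {p. exp (p \<bullet> y) - v \<bullet> p \<le> m0}"
        by (rule hull_minimal[OF FS]) (rule exp_sublevel_convex)
      then show ?thesis using MC[OF that] unfolding \<phi>_def by auto
    qed
    have "(\<Sum>b\<in>M. l b * \<phi> (rv b)) \<le> (\<Sum>b\<in>M. l b * (m0 + v \<bullet> rv b))"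
      using upM lnn by (intro sum_mono mult_left_mono) auto
    also have "\<dots> = m0 * (\<Sum>b\<in>M. l b) + (\<Sum>b\<in>M. l b * (v \<bullet> rv b))"
      by (simp add: distrib_left sum.distrib sum_distrib_left mult_ac)
    also have "\<dots> = m0 * (\<Sum>a\<in>P. l a) + (\<Sum>a\<in>P. l a * (v \<bullet> rv a))"
      by (simp add: e0 sum_inner_rv ei)
    also have "\<dots> = (\<Sum>a\<in>P. l a * (m0 + v \<bullet> rv a))"
      by (simp add: distrib_left sum.distrib sum_distrib_left mult_ac)
    also have "\<dots> \<le> (\<Sum>a\<in>P. l a * \<phi> (rv a))"
      using lowP lnn by (intro sum_mono mult_left_mono) auto
    finally show ?thesis by (simp add: sig)
  qed
qed


lemma coercive_dir:
  fixes Q :: "(real^'n) set" and a0 p :: "real^'n"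
  assumes a0: "a0 \<in> Q" and p: "p \<in> rel_interior (convex hull Q)"
  shows "\<exists>e>0. \<forall>y\<in>span ((\<lambda>x. - a0 + x) ` Q). \<exists>q\<in>Q. q \<bullet> y \<ge> p \<bullet> y + e * norm y"
proof -
  let ?L = "span ((\<lambda>x. - a0 + x) ` Q)"
  from p obtain e where e: "e > 0" and ball: "ball p e \<inter> affine hull Q \<subseteq> convex hull Q"
    unfolding mem_rel_interior_ball by auto
  have aff: "affine hull Q = (\<lambda>x. a0 + x) ` ?L"
    by (rule affine_hull_span_gen) (simp add: a0 hull_inc)
  have pA: "p \<in> affine hull Q"
    using p rel_interior_subset hull_subset convex_hull_subset_affine_hull by blast
  then obtain z where z: "z \<in> ?L" "p = a0 + z" using aff by auto
  show ?thesis
  proof (intro exI[of _ "e/2"] conjI ballI)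
    show "e/2 > 0" using e by simp
    fix y assume y: "y \<in> ?L"
    show "\<exists>q\<in>Q. q \<bullet> y \<ge> p \<bullet> y + e/2 * norm y"
    proof (cases "y = 0")
      case True then show ?thesis using a0 by auto
    next
      case False
      then have ny: "norm y > 0" by simp
      define pp where "pp = p + (e / 2 / norm y) *\<^sub>R y"
      have "pp \<in> ball p e"
        using e ny by (simp add: pp_def dist_norm)
      moreover have "pp \<in> affine hull Q"
        unfolding aff pp_def z(2)
        using z(1) y by (intro image_eqI[of _ _ "z + (e / 2 / norm y) *\<^sub>R y"]) (auto intro: span_add span_mul)
      ultimately have ppC: "pp \<in> convex hull Q" using ball by auto
      have ppy: "pp \<bullet> y = p \<bullet> y + e/2 * norm y"
        using ny by (simp add: pp_def inner_add_left power2_norm_eq_inner[symmetric] power2_eq_square)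
      show ?thesis
      proof (rule ccontr)
        assume "\<not> ?thesis"
        then have "Q \<subseteq> {x. x \<bullet> y < pp \<bullet> y}" using ppy by auto
        then have "convex hull Q \<subseteq> {x. x \<bullet> y < pp \<bullet> y}"
          by (rule hull_minimal) (use convex_halfspace_lt[of y "pp \<bullet> y"] in \<open>simp add: inner_commute\<close>)
        then show False using ppC by auto
      qed
    qed
  qed
qed


lemma existence:
  fixes P M :: "(int^'n) set" and c :: "int^'n \<Rightarrow> real" and h :: "int^'n \<Rightarrow> int"
  assumes fin: "finite P" "finite M" and Mne: "M \<noteq> {}"
    and relint: "rv ` M \<subseteq> rel_interior (convex hull (rv ` P))"
    and cpos: "\<forall>a\<in>P \<union> M. c a > 0" and hM: "\<forall>a\<in>M. h a > 0" and hP: "\<forall>a\<in>P. h a = 0"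
  shows "\<exists>t>0. \<exists>x. (\<forall>i. x $ i > 0) \<and> crit_system_zero P M (\<lambda>a. c a * t powr real_of_int (h a)) x"
proof -
  have Pne: "P \<noteq> {}"
    using relint Mne by auto
  then obtain a0 where a0: "a0 \<in> P" by auto
  define L where "L = span ((\<lambda>x. - rv a0 + x) ` (rv ` P))"
  define n where "n b = nat (h b)" for b
  define G where "G t y = (\<Sum>a\<in>P. c a * exp (rv a \<bullet> y)) - (\<Sum>b\<in>M. c b * t ^ n b * exp (rv b \<bullet> y))"
    for t :: real and y :: "real^'n"
  define Ct where "Ct t = (\<Sum>b\<in>M. c b * t ^ n b)" for t :: real
  define cmin where "cmin = Min (c ` P)"
  have cmin: "cmin > 0" "\<And>a. a \<in> P \<Longrightarrow> cmin \<le> c a"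
    using fin Pne cpos by (auto simp: cmin_def)
  have "\<forall>b\<in>M. \<exists>e>0. \<forall>y\<in>L. \<exists>q\<in>rv ` P. q \<bullet> y \<ge> rv b \<bullet> y + e * norm y"
  proof
    fix b assume "b \<in> M"
    then have "rv b \<in> rel_interior (convex hull (rv ` P))" using relint by auto
    from coercive_dir[OF _ this, of "rv a0"] a0 show "\<exists>e>0. \<forall>y\<in>L. \<exists>q\<in>rv ` P. q \<bullet> y \<ge> rv b \<bullet> y + e * norm y"
      unfolding L_def by auto
  qed
  then obtain e where e: "\<And>b. b \<in> M \<Longrightarrow> e b > 0"
    "\<And>b y. b \<in> M \<Longrightarrow> y \<in> L \<Longrightarrow> \<exists>q\<in>rv ` P. q \<bullet> y \<ge> rv b \<bullet> y + e b * norm y"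
    by metis
  define \<epsilon> where "\<epsilon> = Min (e ` M)"
  have eps: "\<epsilon> > 0" "\<And>b. b \<in> M \<Longrightarrow> \<epsilon> \<le> e b"
    using fin Mne e by (auto simp: \<epsilon>_def)
  have coer: "\<exists>a\<in>P. rv a \<bullet> y \<ge> rv b \<bullet> y + \<epsilon> * norm y" if bM: "b \<in> M" and yL: "y \<in> L" for b y
  proof -
    obtain q where q: "q \<in> rv ` P" "q \<bullet> y \<ge> rv b \<bullet> y + e b * norm y" using e(2)[OF bM yL] by auto
    have "\<epsilon> * norm y \<le> e b * norm y" using eps(2)[OF bM] by (intro mult_right_mono) auto
    then show ?thesis using q by force
  qed
  have cnn: "c a \<ge> 0" if "a \<in> P \<union> M" for a using cpos that by (meson less_imp_le)
  have key: "G t y > 0" if t: "0 \<le> t" and y: "y \<in> L" and lt: "Ct t < cmin * exp (\<epsilon> * norm y)" for t y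
  proof -
    define m where "m = Max ((\<lambda>b. rv b \<bullet> y) ` M)"
    have "m \<in> (\<lambda>b. rv b \<bullet> y) ` M" unfolding m_def using fin Mne by (intro Max_in) auto
    then obtain b1 where b1: "b1 \<in> M" "rv b1 \<bullet> y = m" by auto
    have b1max: "rv b \<bullet> y \<le> rv b1 \<bullet> y" if "b \<in> M" for b
      using b1 that fin unfolding m_def by auto
    have "(\<Sum>b\<in>M. c b * t ^ n b * exp (rv b \<bullet> y)) \<le> (\<Sum>b\<in>M. c b * t ^ n b * exp (rv b1 \<bullet> y))"
      using b1max cnn t by (intro sum_mono mult_left_mono) auto
    also have "\<dots> = Ct t * exp (rv b1 \<bullet> y)"
      by (simp add: Ct_def sum_distrib_right)
    finally have neg: "(\<Sum>b\<in>M. c b * t ^ n b * exp (rv b \<bullet> y)) \<le> Ct t * exp (rv b1 \<bullet> y)" .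
    obtain a1 where a1: "a1 \<in> P" "rv a1 \<bullet> y \<ge> rv b1 \<bullet> y + \<epsilon> * norm y"
      using coer[OF b1(1) y] by auto
    have "c a1 * exp (rv a1 \<bullet> y) \<le> (\<Sum>a\<in>P. c a * exp (rv a \<bullet> y))"
      using a1 fin cnn by (intro member_le_sum) auto
    moreover have "cmin * exp (rv b1 \<bullet> y + \<epsilon> * norm y) \<le> c a1 * exp (rv a1 \<bullet> y)"
      using a1 cmin cnn[of a1] by (intro mult_mono) auto
    moreover have "cmin * exp (rv b1 \<bullet> y + \<epsilon> * norm y) = (cmin * exp (\<epsilon> * norm y)) * exp (rv b1 \<bullet> y)"
      by (simp add: exp_add)
    moreover have "Ct t * exp (rv b1 \<bullet> y) < (cmin * exp (\<epsilon> * norm y)) * exp (rv b1 \<bullet> y)"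
      using lt by simp
    ultimately show ?thesis using neg unfolding G_def by linarith
  qed
  have Ct_mono: "Ct s \<le> Ct t" if "0 \<le> s" "s \<le> t" for s t
    unfolding Ct_def using that cnn by (intro sum_mono mult_left_mono power_mono) auto
  define S where "S = (\<Sum>b\<in>M. c b)"
  have S: "S > 0" unfolding S_def using fin Mne cpos by (intro sum_pos) auto
  have n1: "n b \<ge> 1" if "b \<in> M" for b using hM that by (auto simp: n_def)
  have Ct_le: "Ct t \<le> t * S" if "0 \<le> t" "t \<le> 1" for t
  proof -
    have "Ct t \<le> (\<Sum>b\<in>M. c b * t ^ 1)"
      unfolding Ct_def using that cnn n1 by (intro sum_mono mult_left_mono power_decreasing) auto
    then show ?thesis by (simp add: S_def sum_distrib_left mult_ac)
  qed
  have Ct_ge: "t * S \<le> Ct t" if "1 \<le> t" for t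
  proof -
    have "(\<Sum>b\<in>M. c b * t ^ 1) \<le> Ct t"
      unfolding Ct_def using that cnn n1 by (intro sum_mono mult_left_mono power_increasing) auto
    then show ?thesis by (simp add: S_def sum_distrib_left mult_ac)
  qed
  define t1 where "t1 = min 1 (cmin / (2 * S))"
  have t1: "t1 > 0" "t1 \<le> 1" using cmin S by (auto simp: t1_def)
  have "Ct t1 \<le> t1 * S" using Ct_le t1 by auto
  also have "\<dots> \<le> cmin / (2 * S) * S" using S by (intro mult_right_mono) (auto simp: t1_def)
  also have "\<dots> < cmin" using S cmin by simp
  finally have Ct_t1: "Ct t1 < cmin" .
  define SP where "SP = (\<Sum>a\<in>P. c a)"
  define T1 where "T1 = max 1 (SP / S)"
  have T1: "T1 \<ge> 1" "T1 \<ge> t1" using t1 by (auto simp: T1_def)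
  have "SP = SP / S * S" using S by simp
  also have "\<dots> \<le> T1 * S" using S by (intro mult_right_mono) (auto simp: T1_def)
  also have "\<dots> \<le> Ct T1" using Ct_ge T1 by auto
  finally have SPle: "SP \<le> Ct T1" .
  have GT1: "G T1 0 \<le> 0"
    using SPle by (simp add: G_def SP_def Ct_def)
  have CtT1: "Ct T1 \<ge> 0" unfolding Ct_def using cnn T1 by (intro sum_nonneg mult_nonneg_nonneg) auto
  define R where "R = Ct T1 / (cmin * \<epsilon>)"
  have R: "R \<ge> 0" using CtT1 cmin eps by (simp add: R_def)
  have bigR: "Ct T1 < cmin * exp (\<epsilon> * norm y)" if "norm y > R" for y :: "real^'n"
  proof -
    have "cmin * (1 + \<epsilon> * R) = cmin + Ct T1"
      using cmin eps by (simp add: R_def field_simps)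
    moreover have "\<epsilon> * R < \<epsilon> * norm y" using that eps by simp
    then have "cmin * (1 + \<epsilon> * R) < cmin * exp (\<epsilon> * norm y)"
    proof (intro mult_strict_left_mono cmin)
      have "1 + \<epsilon> * norm y \<le> exp (\<epsilon> * norm y)" by (rule exp_ge_add_one_self)
      then show "1 + \<epsilon> * R < exp (\<epsilon> * norm y)" using \<open>\<epsilon> * R < \<epsilon> * norm y\<close> by linarith
    qed
    ultimately show ?thesis using cmin by linarith
  qed
  define K where "K = ({t1..T1} \<times> (cball 0 R \<inter> L)) \<inter> {p. G (fst p) (snd p) \<le> 0}"
  have contG: "continuous_on UNIV (\<lambda>p. G (fst p) (snd p))"
    unfolding G_def by (intro continuous_intros)
  have cK: "compact K"
    unfolding K_def
    by (intro compact_Int_closed compact_Times compact_Icc compact_cball closed_subspace subspace_span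
        closed_Collect_le contG continuous_on_const) (simp add: L_def)
  have T1K: "(T1, 0) \<in> K"
    using T1 R GT1 by (auto simp: K_def L_def span_zero)
  obtain p where pK: "p \<in> K" and pmin: "\<And>q. q \<in> K \<Longrightarrow> fst p \<le> fst q"
    using continuous_attains_inf[OF cK _ continuous_on_fst[OF continuous_on_id]] T1K by blast
  obtain ts ys where p: "p = (ts, ys)" by (cases p)
  have ts: "t1 \<le> ts" "ts \<le> T1" and ysL: "ys \<in> L" and Gys: "G ts ys \<le> 0"
    using pK by (auto simp: K_def p)
  have tspos: "ts > 0" using ts t1 by simp
  have Gscale: "\<exists>y'\<in>L. \<exists>k>0. \<forall>t. G t y = k * G t y'" for y
  proof -
    obtain y' z where y': "y' \<in> L" and orth: "\<And>w. w \<in> L \<Longrightarrow> orthogonal z w" and yz: "y = y' + z"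
      using orthogonal_subspace_decomp_exists[of "(\<lambda>x. - rv a0 + x) ` (rv ` P)" y] unfolding L_def by metis
    have eqa: "rv a \<bullet> z = rv a0 \<bullet> z" if "a \<in> P \<union> M" for a
    proof -
      have "rv a \<in> affine hull (rv ` P)"
      proof (cases "a \<in> P")
        case True then show ?thesis by (simp add: hull_inc)
      next
        case False
        then have "rv a \<in> rel_interior (convex hull (rv ` P))" using that relint by auto
        then show ?thesis
          using rel_interior_subset convex_hull_subset_affine_hull by blast
      qed
      moreover have "affine hull (rv ` P) = (\<lambda>x. rv a0 + x) ` L"
        unfolding L_def by (rule affine_hull_span_gen) (simp add: a0 hull_inc)
      ultimately obtain w where "w \<in> L" "rv a = rv a0 + w" by auto
      then show ?thesis using orth[of w] by (simp add: orthogonal_def inner_add_left inner_add_right inner_commute[of z w])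
    qed
    have "G t y = exp (rv a0 \<bullet> z) * G t y'" for t
    proof -
      have 1: "(\<Sum>a\<in>P. c a * exp (rv a \<bullet> y)) = exp (rv a0 \<bullet> z) * (\<Sum>a\<in>P. c a * exp (rv a \<bullet> y'))"
        unfolding sum_distrib_left
        by (intro sum.cong refl) (simp add: yz inner_add_right eqa exp_add)
      have 2: "(\<Sum>b\<in>M. c b * t ^ n b * exp (rv b \<bullet> y)) = exp (rv a0 \<bullet> z) * (\<Sum>b\<in>M. c b * t ^ n b * exp (rv b \<bullet> y'))"
        unfolding sum_distrib_left
        by (intro sum.cong refl) (simp add: yz inner_add_right eqa exp_add)
      show ?thesis unfolding G_def 1 2 by (simp add: right_diff_distrib)
    qed
    then show ?thesis using y' by (intro bexI[of _ y'] exI[of _ "exp (rv a0 \<bullet> z)"]) auto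
  qed
  have pos: "G t y > 0" if t: "0 < t" "t < ts" for t y
  proof -
    obtain y' k where y': "y' \<in> L" and k: "k > 0" and Gk: "G t y = k * G t y'"
      using Gscale[of y] by blast
    have "G t y' > 0"
    proof (cases "t < t1")
      case True
      have "Ct t \<le> Ct t1" using True t by (intro Ct_mono) auto
      also have "\<dots> < cmin" by (rule Ct_t1)
      also have "\<dots> \<le> cmin * exp (\<epsilon> * norm y')"
        using cmin eps by simp
      finally show ?thesis using key[OF _ y'] t by simp
    next
      case False
      then have tT: "t1 \<le> t" "t \<le> T1" using t ts by auto
      show ?thesis
      proof (cases "norm y' > R")
        case True
        have "Ct t \<le> Ct T1" using tT t by (intro Ct_mono) auto
        also have "\<dots> < cmin * exp (\<epsilon> * norm y')" by (rule bigR[OF True])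
        finally show ?thesis using key[OF _ y'] t by simp
      next
        case False
        show ?thesis
        proof (rule ccontr)
          assume "\<not> G t y' > 0"
          then have "(t, y') \<in> K" using tT False y' by (auto simp: K_def)
          from pmin[OF this] show False using t by (simp add: p)
        qed
      qed
    qed
    then show ?thesis using Gk k by simp
  qed
  have nonneg: "G ts y \<ge> 0" for y
  proof (rule ccontr)
    assume "\<not> G ts y \<ge> 0"
    then have neg: "G ts y < 0" by simp
    have "isCont (\<lambda>t. G t y) ts" unfolding G_def by (intro continuous_intros)
    then have "((\<lambda>t. G t y) \<longlongrightarrow> G ts y) (at_left ts)"
      unfolding isCont_def by (rule tendsto_mono[OF at_le, rotated]) simp
    then have "eventually (\<lambda>t. G t y < 0) (at_left ts)"
      using neg by (rule order_tendstoD(2))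
    moreover have "eventually (\<lambda>t. t \<in> {0<..<ts}) (at_left ts)"
      using tspos by (rule eventually_at_left_real)
    ultimately have "eventually (\<lambda>t. G t y < 0 \<and> t \<in> {0<..<ts}) (at_left ts)"
      by (rule eventually_conj)
    then obtain t where "G t y < 0" "0 < t" "t < ts"
      using eventually_happens[of _ "at_left ts"] by auto
    then show False using pos[of t y] by simp
  qed
  have G0: "G ts ys = 0" using Gys nonneg[of ys] by simp
  define xs :: "real^'n" where "xs = (\<chi> i. exp (ys $ i))"
  have xspos: "\<forall>i. xs $ i > 0" by (simp add: xs_def)
  have lnxs: "lnv xs = ys" by (simp add: xs_def lnv_def vec_eq_iff)
  have sigeq: "signomial P M (\<lambda>a. c a * ts powr real_of_int (h a)) x = G ts (lnv x)"
    if x: "\<forall>i. x $ i > 0" for x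
  proof -
    have 1: "(\<Sum>a\<in>P. c a * ts powr real_of_int (h a) * monom a x) = (\<Sum>a\<in>P. c a * exp (rv a \<bullet> lnv x))"
      using hP tspos by (intro sum.cong refl) (simp add: monom_exp[OF x])
    have 2: "(\<Sum>b\<in>M. c b * ts powr real_of_int (h b) * monom b x) = (\<Sum>b\<in>M. c b * ts ^ n b * exp (rv b \<bullet> lnv x))"
    proof (intro sum.cong refl)
      fix b assume "b \<in> M"
      then have "real_of_int (h b) = real (n b)" using hM by (auto simp: n_def)
      then show "c b * ts powr real_of_int (h b) * monom b x = c b * ts ^ n b * exp (rv b \<bullet> lnv x)"
        using tspos by (simp add: monom_exp[OF x] powr_realpow)
    qed
    show ?thesis unfolding signomial_def 1 2 G_def ..
  qed
  have "crit_system_zero P M (\<lambda>a. c a * ts powr real_of_int (h a)) xs"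
  proof (rule crit_from_min[OF xspos fin])
    show "signomial P M (\<lambda>a. c a * ts powr real_of_int (h a)) xs = 0"
      using sigeq[OF xspos] lnxs G0 by simp
    show "0 \<le> signomial P M (\<lambda>a. c a * ts powr real_of_int (h a)) z" if "\<forall>j. 0 < z $ j" for z
      using sigeq[OF that] nonneg by simp
  qed
  then show ?thesis using tspos xspos by blast
qed


lemma strict_dec:
  fixes P M :: "(int^'n) set"
  assumes fin: "finite P" "finite M" and Mne: "M \<noteq> {}"
    and cpos: "\<forall>a\<in>P \<union> M. c a > 0" and hM: "\<forall>a\<in>M. h a > 0" and hP: "\<forall>a\<in>P. h a = 0"
    and t: "0 < t1" "t1 < t2" and x: "\<forall>i. x $ i > 0"
  shows "signomial P M (\<lambda>a. c a * t2 powr real_of_int (h a)) x < signomial P M (\<lambda>a. c a * t1 powr real_of_int (h a)) x"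
proof -
  have 1: "(\<Sum>a\<in>P. c a * t2 powr real_of_int (h a) * monom a x) = (\<Sum>a\<in>P. c a * t1 powr real_of_int (h a) * monom a x)"
    using hP t by (intro sum.cong refl) simp
  have 2: "(\<Sum>b\<in>M. c b * t1 powr real_of_int (h b) * monom b x) < (\<Sum>b\<in>M. c b * t2 powr real_of_int (h b) * monom b x)"
  proof (rule sum_strict_mono[OF fin(2) Mne])
    fix b assume b: "b \<in> M"
    have "t1 powr real_of_int (h b) < t2 powr real_of_int (h b)"
      using hM b t by (intro powr_less_mono2) auto
    moreover have "c b > 0" using cpos b by auto
    moreover have "monom b x > 0" by (simp add: monom_exp[OF x])
    ultimately show "c b * t1 powr real_of_int (h b) * monom b x < c b * t2 powr real_of_int (h b) * monom b x"
      by simp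
  qed
  show ?thesis unfolding signomial_def 1 using 2 by simp
qed

theorem theorem3p16:
  fixes Ap Am :: "(int ^ 'n) set" and \<Gamma> :: "(real ^ 'n) set"
    and c :: "int ^ 'n \<Rightarrow> real" and h :: "int ^ 'n \<Rightarrow> int"
  assumes "finite Ap" "finite Am" "Ap \<noteq> {}" "Am \<noteq> {}" "Ap \<inter> Am = {}"
    and "\<Gamma> face_of convex hull (rv ` Ap)"
    and "rv ` Am \<subseteq> rel_interior \<Gamma>"
    and "nonseparable {a\<in>Ap. rv a \<in> \<Gamma>} {a\<in>Am. rv a \<in> \<Gamma>}"
    and "\<forall>a\<in>Ap \<union> Am. c a > 0"
    and "lifts h Ap Am"
  shows "\<exists>!t::real. t > 0 \<and>
    (\<exists>x::real ^ 'n. (\<forall>i. x $ i > 0) \<and>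
       crit_system_zero {a\<in>Ap. rv a \<in> \<Gamma>} {a\<in>Am. rv a \<in> \<Gamma>}
         (\<lambda>a. c a * t powr real_of_int (h a)) x)"
proof -
  define P where "P = {a\<in>Ap. rv a \<in> \<Gamma>}"
  define M where "M = {a\<in>Am. rv a \<in> \<Gamma>}"
  have fin: "finite P" "finite M" using assms(1,2) by (auto simp: P_def M_def)
  have Mne: "M \<noteq> {}"
  proof -
    obtain a where a: "a \<in> Am" using assms(4) by auto
    then have "rv a \<in> \<Gamma>" using assms(7) rel_interior_subset by blast
    then show ?thesis using a by (auto simp: M_def)
  qed
  have ns: "nonseparable P M" using assms(8) by (simp add: P_def M_def)
  then have relint: "rv ` M \<subseteq> rel_interior (convex hull (rv ` P))"
    by (simp add: nonseparable_def)
  have cpos: "\<forall>a\<in>P \<union> M. c a > 0" using assms(9) by (auto simp: P_def M_def)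
  have hM: "\<forall>a\<in>M. h a > 0" and hP: "\<forall>a\<in>P. h a = 0"
    using assms(10) by (auto simp: lifts_def P_def M_def)
  have ex: "\<exists>t>0. \<exists>x. (\<forall>i. x $ i > 0) \<and> crit_system_zero P M (\<lambda>a. c a * t powr real_of_int (h a)) x"
    by (rule existence[OF fin Mne relint cpos hM hP])
  have dnn: "\<forall>a\<in>P \<union> M. c a * t powr real_of_int (h a) \<ge> 0" for t
  proof
    fix a assume "a \<in> P \<union> M"
    then have "c a > 0" using cpos by blast
    then show "c a * t powr real_of_int (h a) \<ge> 0" by simp
  qed
  have less: False if t: "0 < t1" "t1 < t2"
    and x1: "\<forall>i. x1 $ i > 0" "crit_system_zero P M (\<lambda>a. c a * t1 powr real_of_int (h a)) x1"
    and x2: "\<forall>i. x2 $ i > 0" "crit_system_zero P M (\<lambda>a. c a * t2 powr real_of_int (h a)) x2"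
    for t1 t2 x1 x2
  proof -
    have "signomial P M (\<lambda>a. c a * t2 powr real_of_int (h a)) x1 \<ge> 0"
      by (rule NN[OF fin dnn ns x2 x1(1)])
    moreover have "signomial P M (\<lambda>a. c a * t2 powr real_of_int (h a)) x1 < signomial P M (\<lambda>a. c a * t1 powr real_of_int (h a)) x1"
      by (rule strict_dec[OF fin Mne cpos hM hP t x1(1)])
    moreover have "signomial P M (\<lambda>a. c a * t1 powr real_of_int (h a)) x1 = 0"
      using x1(2) by (simp add: crit_system_zero_def)
    ultimately show False by linarith
  qed
  show ?thesis
    unfolding P_def[symmetric] M_def[symmetric]
  proof (rule ex_ex1I)
    show "\<exists>t. t > 0 \<and> (\<exists>x. (\<forall>i. x $ i > 0) \<and> crit_system_zero P M (\<lambda>a. c a * t powr real_of_int (h a)) x)"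
      using ex by blast
  next
    fix t1 t2
    assume A: "t1 > 0 \<and> (\<exists>x. (\<forall>i. x $ i > 0) \<and> crit_system_zero P M (\<lambda>a. c a * t1 powr real_of_int (h a)) x)"
      and B: "t2 > 0 \<and> (\<exists>x. (\<forall>i. x $ i > 0) \<and> crit_system_zero P M (\<lambda>a. c a * t2 powr real_of_int (h a)) x)"
    from A obtain x1 where x1: "\<forall>i. x1 $ i > 0" "crit_system_zero P M (\<lambda>a. c a * t1 powr real_of_int (h a)) x1" by blast
    from B obtain x2 where x2: "\<forall>i. x2 $ i > 0" "crit_system_zero P M (\<lambda>a. c a * t2 powr real_of_int (h a)) x2" by blast
    show "t1 = t2"
    proof (rule linorder_cases[of t1 t2])
      assume "t1 < t2" then show ?thesis using less[OF _ _ x1 x2] A by blast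
    next
      assume "t2 < t1" then show ?thesis using less[OF _ _ x2 x1] B by blast
    qed
  qed
qed

end
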